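(* Let $G$ be a finite simple graph of order $n$ and size $m$ without isolated vertices, with minimum degree $\delta$ and maximum degree $\Delta$, and let $n_e$ be the number of vertices of even degree in $G$. Then (i) $\gamma_{st}(G)\geq \dfrac{\left(\lfloor\frac{\delta}{2}\rfloor-\lceil\frac{\Delta}{2}\rceil+2\right)n}{\lfloor\frac{\delta}{2}\rfloor+\lceil\frac{\Delta}{2}\rceil}$; (ii) $\gamma_{st}(G)\geq \dfrac{\left(5-3\Delta-2\lceil\frac{\Delta}{2}\rceil\right)n+2n_e+8m}{3\Delta+2\lceil\frac{\Delta}{2}\rceil-1}$; (iii) $\gamma_{st}(G)\geq \dfrac{\left(5+3\delta-2\lceil\frac{\Delta}{2}\rceil\right)n+2n_e-4m}{3\delta+2\lceil\frac{\Delta}{2}\rceil-1}$; and these bounds are sharp.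
   Context: For a vertex $v$, $N(v)$ is its open neighborhood. A signed total dominating function (STDF) of $G$ is a function $f:V(G)\to\{-1,1\}$ such that $\sum_{u\in N(v)}f(u)\geq 1$ for every vertex $v$; the signed total domination number $\gamma_{st}(G)$ is the minimum of $\sum_{v\in V(G)}f(v)$ over all STDFs $f$ of $G$. *)

theory Defs
  imports Complex_Main
begin

definition simple_graph :: "'a set \<Rightarrow> ('a \<Rightarrow> 'a \<Rightarrow> bool) \<Rightarrow> bool" where
  "simple_graph V E \<longleftrightarrow> finite V \<and>
     (\<forall>u v. E u v \<longrightarrow> u \<in> V \<and> v \<in> V) \<and>
     (\<forall>u v. E u v \<longrightarrow> E v u) \<and> (\<forall>v. \<not> E v v)"

definition nbhd :: "'a set \<Rightarrow> ('a \<Rightarrow> 'a \<Rightarrow> bool) \<Rightarrow> 'a \<Rightarrow> 'a set" where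
  "nbhd V E v = {u \<in> V. E v u}"

definition degree :: "'a set \<Rightarrow> ('a \<Rightarrow> 'a \<Rightarrow> bool) \<Rightarrow> 'a \<Rightarrow> nat" where
  "degree V E v = card (nbhd V E v)"

definition min_degree :: "'a set \<Rightarrow> ('a \<Rightarrow> 'a \<Rightarrow> bool) \<Rightarrow> nat" where
  "min_degree V E = Min (degree V E ` V)"

definition max_degree :: "'a set \<Rightarrow> ('a \<Rightarrow> 'a \<Rightarrow> bool) \<Rightarrow> nat" where
  "max_degree V E = Max (degree V E ` V)"

definition num_edges :: "'a set \<Rightarrow> ('a \<Rightarrow> 'a \<Rightarrow> bool) \<Rightarrow> nat" where
  "num_edges V E = card {{u, v} | u v. u \<in> V \<and> v \<in> V \<and> E u v}"

definition num_even_deg :: "'a set \<Rightarrow> ('a \<Rightarrow> 'a \<Rightarrow> bool) \<Rightarrow> nat" where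
  "num_even_deg V E = card {v \<in> V. even (degree V E v)}"

definition no_isolated :: "'a set \<Rightarrow> ('a \<Rightarrow> 'a \<Rightarrow> bool) \<Rightarrow> bool" where
  "no_isolated V E \<longleftrightarrow> (\<forall>v\<in>V. nbhd V E v \<noteq> {})"

text \<open>Signed total dominating function (values -1/1 on V; fixed to 1 outside V
  so that distinct functions on V are distinct as HOL functions).\<close>
definition is_STDF :: "'a set \<Rightarrow> ('a \<Rightarrow> 'a \<Rightarrow> bool) \<Rightarrow> ('a \<Rightarrow> int) \<Rightarrow> bool" where
  "is_STDF V E f \<longleftrightarrow> (\<forall>v\<in>V. f v = -1 \<or> f v = 1) \<and> (\<forall>v. v \<notin> V \<longrightarrow> f v = 1) \<and>
     (\<forall>v\<in>V. (\<Sum>u\<in>nbhd V E v. f u) \<ge> 1)"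

definition gamma_st :: "'a set \<Rightarrow> ('a \<Rightarrow> 'a \<Rightarrow> bool) \<Rightarrow> int" where
  "gamma_st V E = Min {(\<Sum>v\<in>V. f v) | f. is_STDF V E f}"

end

theory Submission
  imports Defs
begin



lemma dc:
  assumes "finite A" "finite B" "\<And>u v. E u v \<Longrightarrow> E v u"
  shows "(\<Sum>v\<in>A. card {u\<in>B. E v u}) = (\<Sum>u\<in>B. card {v\<in>A. E u v})"
proof -
  have "(\<Sum>v\<in>A. card {u\<in>B. E v u}) = (\<Sum>v\<in>A. \<Sum>u\<in>{u\<in>B. E v u}. (1::nat))" by simp
  also have "\<dots> = (\<Sum>u\<in>B. \<Sum>v\<in>{v\<in>A. E v u}. (1::nat))"
    using sum.swap_restrict[OF assms(1,2), of "\<lambda>_ _. (1::nat)" E] by simp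
  also have "\<dots> = (\<Sum>u\<in>B. card {v\<in>A. E u v})"
    using assms(3) by (intro sum.cong refl) (auto intro!: arg_cong[where f=card])
  finally show ?thesis .
qed

lemma handshake:
  assumes "simple_graph V E"
  shows "(\<Sum>v\<in>V. degree V E v) = 2 * num_edges V E"
proof -
  from assms have fin: "finite V" and sym: "\<And>u v. E u v \<Longrightarrow> E v u" and irr: "\<And>v. \<not> E v v"
    unfolding simple_graph_def by auto
  define D where "D = Sigma V (\<lambda>u. {v\<in>V. E u v})"
  define h where "h = (\<lambda>p::'a\<times>'a. {fst p, snd p})"
  have finD: "finite D" using fin unfolding D_def by auto
  have hD: "h ` D = {{u, v} | u v. u \<in> V \<and> v \<in> V \<and> E u v}"
    unfolding D_def h_def by (auto simp: image_iff; blast)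
  have "(\<Sum>v\<in>V. degree V E v) = card D"
    unfolding D_def degree_def nbhd_def using fin by simp
  also have "card D = (\<Sum>e\<in>h ` D. card {p\<in>D. h p = e})"
    using sum.image_gen[OF finD, of "\<lambda>_. 1::nat" h] by simp
  also have "\<dots> = (\<Sum>e\<in>h ` D. 2)"
  proof (rule sum.cong[OF refl])
    fix e assume "e \<in> h ` D"
    then obtain u v where uv: "u\<in>V" "v\<in>V" "E u v" and e: "e = {u,v}" unfolding D_def h_def by auto
    have "u \<noteq> v" using irr uv by auto
    have "{p\<in>D. h p = e} = {(u,v),(v,u)}"
      using uv sym e unfolding D_def h_def by (auto simp: doubleton_eq_iff)
    then show "card {p\<in>D. h p = e} = 2" using \<open>u\<noteq>v\<close> by simp
  qed
  finally show ?thesis unfolding num_edges_def hD by simp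
qed

lemma lin1: "(T::real) - L = 2 * (Z - p - Y) \<Longrightarrow> Y \<le> x \<Longrightarrow> x + p \<le> Z \<Longrightarrow> L \<le> T"
  by argo

lemma lin2: "(T::real) - L = 2 * (3 * PD + 2 * Z - 3 * p - 2 * q - ne - 4 * m) \<Longrightarrow>
   Y \<le> x \<Longrightarrow> x + p \<le> Z \<Longrightarrow> SM + q \<le> 2 * x \<Longrightarrow> SM + n + ne \<le> SP \<Longrightarrow>
   SP \<le> PD \<Longrightarrow> SP + SM = 2 * m \<Longrightarrow> n = p + q \<Longrightarrow> L \<le> T"
  by argo

lemma lin3: "(T::real) - L = 2 * (2 * Z - 3 * p - 3 * QD - 2 * q + 2 * m - ne) \<Longrightarrow>
   QF = 2 * Y - q \<Longrightarrow> Y \<le> x \<Longrightarrow> x + p \<le> Z \<Longrightarrow> SM + n + ne \<le> SP \<Longrightarrow>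
   QD \<le> SM \<Longrightarrow> SP + SM = 2 * m \<Longrightarrow> QD \<le> QF \<Longrightarrow> n = p + q \<Longrightarrow> L \<le> T"
  by argo

lemma main_bound:
  assumes G: "simple_graph V E" and nE: "V \<noteq> {}" and ni: "no_isolated V E" and f: "is_STDF V E f"
  defines "n \<equiv> real (card V)" and "m \<equiv> real (num_edges V E)" and "ne \<equiv> real (num_even_deg V E)"
    and "fd \<equiv> real (min_degree V E div 2)" and "cD \<equiv> real ((max_degree V E + 1) div 2)"
    and "d \<equiv> real (min_degree V E)" and "DD \<equiv> real (max_degree V E)"
    and "g \<equiv> real_of_int (\<Sum>v\<in>V. f v)"
  shows "g \<ge> ((fd - cD + 2) * n) / (fd + cD) \<and> g \<ge> ((5 - 3*DD - 2*cD) * n + 2*ne + 8*m) / (3*DD + 2*cD - 1)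
      \<and> g \<ge> ((5 + 3*d - 2*cD) * n + 2*ne - 4*m) / (3*d + 2*cD - 1)"
proof -
  from G have fin: "finite V" and sym: "\<And>u v. E u v \<Longrightarrow> E v u"
    unfolding simple_graph_def by auto
  define dg where "dg = degree V E"
  have dg_eq: "\<And>v. dg v = card {u\<in>V. E v u}" unfolding dg_def degree_def nbhd_def by simp
  define \<delta> where "\<delta> = min_degree V E"
  define \<Delta> where "\<Delta> = max_degree V E"
  have dmin: "\<And>v. v\<in>V \<Longrightarrow> \<delta> \<le> dg v" unfolding \<delta>_def min_degree_def dg_def using fin by simp
  have dmax: "\<And>v. v\<in>V \<Longrightarrow> dg v \<le> \<Delta>" unfolding \<Delta>_def max_degree_def dg_def using fin by simp
  have dpos: "\<And>v. v\<in>V \<Longrightarrow> 1 \<le> dg v"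
  proof -
    fix v assume "v \<in> V"
    then have "{u\<in>V. E v u} \<noteq> {}" using ni unfolding no_isolated_def nbhd_def by auto
    then show "1 \<le> dg v" using fin unfolding dg_eq by (simp add: Suc_le_eq card_gt_0_iff)
  qed
  have "\<delta> \<in> dg ` V" unfolding \<delta>_def min_degree_def dg_def using fin nE by simp
  then have d1: "1 \<le> \<delta>" using dpos by auto
  obtain v0 where "v0 \<in> V" using nE by auto
  then have dD: "\<delta> \<le> \<Delta>" using dmin dmax by (meson le_trans)
  define P where "P = {v\<in>V. f v = 1}"
  define M where "M = {v\<in>V. f v = -1}"
  have PM: "V = P \<union> M" "P \<inter> M = {}" using f unfolding is_STDF_def P_def M_def by auto
  have finP: "finite P" and finM: "finite M" using fin PM by auto
  define a where "a v = card {u\<in>P. E v u}" for v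
  define b where "b v = card {u\<in>M. E v u}" for v
  have ab: "a v + b v = dg v \<and> b v + 1 \<le> a v" if "v \<in> V" for v
  proof -
    have sp: "{u\<in>V. E v u} = {u\<in>P. E v u} \<union> {u\<in>M. E v u}" using PM by auto
    have dj: "{u\<in>P. E v u} \<inter> {u\<in>M. E v u} = {}" using PM by auto
    have f1: "finite {u\<in>P. E v u}" "finite {u\<in>M. E v u}" using finP finM by auto
    have sP: "(\<Sum>u\<in>{u\<in>P. E v u}. f u) = int (a v)" unfolding a_def P_def by simp
    have sM: "(\<Sum>u\<in>{u\<in>M. E v u}. f u) = - int (b v)" unfolding b_def M_def by simp
    have "(\<Sum>u\<in>{u\<in>V. E v u}. f u) \<ge> 1" using f that unfolding is_STDF_def nbhd_def by auto
    then have "int (a v) - int (b v) \<ge> 1" unfolding sp using sum.union_disjoint[OF f1 dj, of f] sP sM by simp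
    moreover have "a v + b v = dg v" unfolding dg_eq sp a_def b_def using card_Un_disjoint[OF f1 dj] by simp
    ultimately show ?thesis by simp
  qed
  have SP: "(\<Sum>u\<in>P. dg u) = (\<Sum>v\<in>V. a v)"
  proof -
    have "(\<Sum>u\<in>P. dg u) = (\<Sum>u\<in>P. card {v\<in>V. E u v})" using dg_eq by simp
    also have "\<dots> = (\<Sum>v\<in>V. card {u\<in>P. E v u})" using dc[OF fin finP sym] by simp
    finally show ?thesis unfolding a_def .
  qed
  have SM: "(\<Sum>u\<in>M. dg u) = (\<Sum>v\<in>V. b v)"
  proof -
    have "(\<Sum>u\<in>M. dg u) = (\<Sum>u\<in>M. card {v\<in>V. E u v})" using dg_eq by simp
    also have "\<dots> = (\<Sum>v\<in>V. card {u\<in>M. E v u})" using dc[OF fin finM sym] by simp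
    finally show ?thesis unfolding b_def .
  qed
  have X: "(\<Sum>v\<in>M. a v) = (\<Sum>v\<in>P. b v)"
    unfolding a_def b_def using dc[OF finM finP sym] by simp
  define x where "x = (\<Sum>v\<in>M. a v)"
  define p where "p = card P"
  define q where "q = card M"
  define SP' where "SP' = (\<Sum>u\<in>P. dg u)"
  define SM' where "SM' = (\<Sum>u\<in>M. dg u)"
  define cD' where "cD' = (\<Delta> + 1) div 2"
  define fd' where "fd' = \<delta> div 2"
  define ne' where "ne' = num_even_deg V E"
  define m' where "m' = num_edges V E"
  have npq: "card V = p + q" unfolding p_def q_def using PM finP finM card_Un_disjoint by metis
  have cD1: "1 \<le> cD'" unfolding cD'_def using d1 dD by simp
  have dfd: "\<delta> \<le> 2 * fd' + 1" unfolding fd'_def by simp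
  have bc: "b v + 1 \<le> cD'" if "v \<in> V" for v
  proof -
    have "a v + b v \<le> \<Delta>" "b v + 1 \<le> a v" using ab[OF that] dmax[OF that] by auto
    then show ?thesis unfolding cD'_def by presburger
  qed
  have af: "fd' + 1 \<le> a v" if "v \<in> V" for v
  proof -
    have "\<delta> \<le> a v + b v" "b v + 1 \<le> a v" using ab[OF that] dmin[OF that] by auto
    then show ?thesis unfolding fd'_def by presburger
  qed
  have abe: "b v + 1 + (if even (dg v) then 1 else 0) \<le> a v" if "v \<in> V" for v
  proof -
    have "a v + b v = dg v" "b v + 1 \<le> a v" using ab[OF that] by auto
    then show ?thesis by (cases "even (dg v)") presburger+
  qed
  have B: "SM' + card V + ne' \<le> SP'"
  proof -
    have "(\<Sum>v\<in>V. b v + 1 + (if even (dg v) then 1 else 0)) \<le> (\<Sum>v\<in>V. a v)"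
      using abe by (rule sum_mono)
    moreover have "(\<Sum>v\<in>V. (if even (dg v) then 1 else 0)) = ne'"
      unfolding ne'_def num_even_deg_def dg_def using sum.inter_filter[OF fin, of "\<lambda>_. (1::nat)"] by simp
    moreover have "(\<Sum>v\<in>V. b v + 1 + (if even (dg v) then 1 else 0)) =
       (\<Sum>v\<in>V. b v) + (\<Sum>v\<in>V. (1::nat)) + (\<Sum>v\<in>V. (if even (dg v) then 1 else 0))"
      by (simp only: sum.distrib)
    ultimately show ?thesis unfolding SM'_def SP'_def SP SM by simp
  qed
  have C1: "SP' \<le> p * \<Delta>" unfolding SP'_def p_def
    using sum_bounded_above[of P dg \<Delta>] dmax PM by auto
  have C2: "q * \<delta> \<le> SM'" unfolding SM'_def q_def
    using sum_bounded_below[of M \<delta> dg] dmin PM by auto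
  have D: "SP' + SM' = 2 * m'"
  proof -
    have "SP' + SM' = (\<Sum>v\<in>V. dg v)" unfolding SP'_def SM'_def
      using PM sum.union_disjoint[OF finP finM, of dg] by simp
    then show ?thesis unfolding m'_def dg_def using handshake[OF G] by simp
  qed
  have E1: "SM' + q \<le> 2 * x"
  proof -
    have "(\<Sum>v\<in>M. b v + 1) \<le> x" unfolding x_def using ab PM by (intro sum_mono) auto
    moreover have "(\<Sum>v\<in>M. b v + 1) = (\<Sum>v\<in>M. b v) + (\<Sum>v\<in>M. (1::nat))" by (simp only: sum.distrib)
    ultimately have "(\<Sum>v\<in>M. b v) + q \<le> x" unfolding q_def by simp
    moreover have "SM' = (\<Sum>v\<in>P. b v) + (\<Sum>v\<in>M. b v)" unfolding SM'_def SM
      using PM sum.union_disjoint[OF finP finM, of b] by simp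
    ultimately show ?thesis using X unfolding x_def by simp
  qed
  have E2: "x + p \<le> p * cD'"
  proof -
    have "(\<Sum>v\<in>P. b v + 1) \<le> p * cD'" unfolding p_def
      using sum_bounded_above[of P "\<lambda>v. b v + 1" cD'] bc PM by auto
    moreover have "(\<Sum>v\<in>P. b v + 1) = (\<Sum>v\<in>P. b v) + (\<Sum>v\<in>P. (1::nat))" by (simp only: sum.distrib)
    ultimately show ?thesis unfolding x_def X p_def by simp
  qed
  have A: "q * (fd' + 1) \<le> x" unfolding x_def q_def
    using sum_bounded_below[of M "fd' + 1" a] af PM by auto
  have gpq: "g = real p - real q"
  proof -
    have "(\<Sum>v\<in>V. f v) = (\<Sum>v\<in>P. f v) + (\<Sum>v\<in>M. f v)"
      using PM sum.union_disjoint[OF finP finM, of f] by simp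
    also have "\<dots> = int p - int q" unfolding p_def q_def P_def M_def by simp
    finally show ?thesis unfolding g_def by simp
  qed
  have qd: "q * \<delta> \<le> q * (2 * fd' + 1)" using dfd by (rule mult_left_mono) simp
  have rn: "n = real p + real q" unfolding n_def using npq by simp
  have rA: "real q * (fd + 1) \<le> real x"
  proof -
    have "real (q * (fd' + 1)) \<le> real x" using A by (simp only: of_nat_le_iff)
    then show ?thesis unfolding fd_def fd'_def \<delta>_def by (simp add: algebra_simps)
  qed
  have rE2: "real x + real p \<le> real p * cD"
  proof -
    have "real (x + p) \<le> real (p * cD')" using E2 by (simp only: of_nat_le_iff)
    then show ?thesis unfolding cD_def cD'_def \<Delta>_def by (simp add: algebra_simps)
  qed
  have rE1: "real SM' + real q \<le> 2 * real x"
  proof -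
    have "real (SM' + q) \<le> real (2 * x)" using E1 by (simp only: of_nat_le_iff)
    then show ?thesis by simp
  qed
  have rB: "real SM' + n + ne \<le> real SP'"
  proof -
    have "real (SM' + card V + ne') \<le> real SP'" using B by (simp only: of_nat_le_iff)
    then show ?thesis unfolding n_def ne_def ne'_def by simp
  qed
  have rC1: "real SP' \<le> real p * DD"
  proof -
    have "real SP' \<le> real (p * \<Delta>)" using C1 by (simp only: of_nat_le_iff)
    then show ?thesis unfolding DD_def \<Delta>_def by simp
  qed
  have rC2: "real q * d \<le> real SM'"
  proof -
    have "real (q * \<delta>) \<le> real SM'" using C2 by (simp only: of_nat_le_iff)
    then show ?thesis unfolding d_def \<delta>_def by simp
  qed
  have rD: "real SP' + real SM' = 2 * m"
  proof -
    have "real (SP' + SM') = real (2 * m')" using D by simp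
    then show ?thesis unfolding m_def m'_def by simp
  qed
  have rqd: "real q * d \<le> real q * (2 * fd + 1)"
  proof -
    have "real (q * \<delta>) \<le> real (q * (2 * fd' + 1))" using qd by (simp only: of_nat_le_iff)
    then show ?thesis unfolding d_def fd_def fd'_def \<delta>_def by (simp add: algebra_simps)
  qed
  have rcD: "1 \<le> cD" using cD1 unfolding cD_def cD'_def \<Delta>_def by (simp add: algebra_simps)
  have rd1: "1 \<le> d" using d1 unfolding d_def \<delta>_def by simp
  have rDD: "d \<le> DD" using dD unfolding d_def DD_def \<delta>_def \<Delta>_def by simp
  have rfd: "0 \<le> fd" unfolding fd_def by simp
  have i1: "(fd - cD + 2) * n \<le> g * (fd + cD)"
  proof -
    have "g * (fd + cD) - (fd - cD + 2) * n = 2 * (real p * cD - real p - real q * (fd + 1))"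
      unfolding gpq rn by (simp add: algebra_simps)
    then show ?thesis using rA rE2 by (rule lin1)
  qed
  have i2: "(5 - 3*DD - 2*cD) * n + 2*ne + 8*m \<le> g * (3*DD + 2*cD - 1)"
  proof -
    have "g * (3*DD + 2*cD - 1) - ((5 - 3*DD - 2*cD) * n + 2*ne + 8*m)
          = 2 * (3 * (real p * DD) + 2 * (real p * cD) - 3 * real p - 2 * real q - ne - 4 * m)"
      unfolding gpq rn by (simp add: algebra_simps)
    then show ?thesis using rA rE2 rE1 rB rC1 rD rn by (rule lin2)
  qed
  have i3: "(5 + 3*d - 2*cD) * n + 2*ne - 4*m \<le> g * (3*d + 2*cD - 1)"
  proof -
    have "g * (3*d + 2*cD - 1) - ((5 + 3*d - 2*cD) * n + 2*ne - 4*m)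
          = 2 * (2 * (real p * cD) - 3 * real p - 3 * (real q * d) - 2 * real q + 2 * m - ne)"
      unfolding gpq rn by (simp add: algebra_simps)
    moreover have "real q * (2 * fd + 1) = 2 * (real q * (fd + 1)) - real q" by (simp add: algebra_simps)
    ultimately show ?thesis using rA rE2 rB rC2 rD rqd rn by (rule lin3)
  qed
  show ?thesis
    using i1 i2 i3 rcD rd1 rDD rfd by (simp add: divide_le_eq)
qed

lemma gamma_attained:
  assumes G: "simple_graph V E" and ni: "no_isolated V E"
  shows "\<exists>f. is_STDF V E f \<and> gamma_st V E = (\<Sum>v\<in>V. f v)"
proof -
  from G have fin: "finite V" unfolding simple_graph_def by auto
  let ?S = "{(\<Sum>v\<in>V. f v) | f. is_STDF V E f}"
  have one: "is_STDF V E (\<lambda>_. 1)"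
    unfolding is_STDF_def
  proof (intro conjI ballI allI impI)
    fix v assume "v \<in> V"
    then have "nbhd V E v \<noteq> {}" using ni unfolding no_isolated_def by auto
    moreover have "finite (nbhd V E v)" using fin unfolding nbhd_def by auto
    ultimately show "(\<Sum>u\<in>nbhd V E v. (1::int)) \<ge> 1"
      by (simp add: Suc_le_eq card_gt_0_iff)
  qed auto
  have sub: "?S \<subseteq> {- int (card V) .. int (card V)}"
  proof
    fix s assume "s \<in> ?S"
    then obtain f where f: "is_STDF V E f" and s: "s = (\<Sum>v\<in>V. f v)" by auto
    have b: "\<And>v. v \<in> V \<Longrightarrow> -1 \<le> f v \<and> f v \<le> 1" using f unfolding is_STDF_def by force
    have "(\<Sum>v\<in>V. f v) \<le> of_nat (card V) * 1" by (rule sum_bounded_above) (use b in auto)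
    moreover have "of_nat (card V) * (-1) \<le> (\<Sum>v\<in>V. f v)" by (rule sum_bounded_below) (use b in auto)
    ultimately show "s \<in> {- int (card V) .. int (card V)}" using s by simp
  qed
  have "finite ?S" by (rule finite_subset[OF sub]) simp
  moreover have "?S \<noteq> {}" using one by blast
  ultimately have "Min ?S \<in> ?S" by (rule Min_in)
  then show ?thesis unfolding gamma_st_def by auto
qed

definition V0 :: "nat set" where "V0 = {0, 1}"
definition E0 :: "nat \<Rightarrow> nat \<Rightarrow> bool" where "E0 u v = (u \<noteq> v \<and> u \<in> V0 \<and> v \<in> V0)"

lemma K2_facts:
  "simple_graph V0 E0" "V0 \<noteq> {}" "no_isolated V0 E0" "min_degree V0 E0 = 1" "max_degree V0 E0 = 1"
  "num_edges V0 E0 = 1" "num_even_deg V0 E0 = 0" "card V0 = 2" "gamma_st V0 E0 = 2"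
proof -
  have nb: "nbhd V0 E0 v = (if v = 0 then {1} else {0})" if "v \<in> V0" for v
    using that unfolding nbhd_def E0_def V0_def by auto
  have dg: "degree V0 E0 v = 1" if "v \<in> V0" for v using nb[OF that] unfolding degree_def by simp
  have im: "degree V0 E0 ` V0 = {1}" using dg unfolding V0_def by auto
  show "simple_graph V0 E0" unfolding simple_graph_def E0_def V0_def by auto
  show "V0 \<noteq> {}" unfolding V0_def by simp
  show "no_isolated V0 E0" unfolding no_isolated_def using nb by simp
  show "min_degree V0 E0 = 1" unfolding min_degree_def im by simp
  show "max_degree V0 E0 = 1" unfolding max_degree_def im by simp
  have "{{u, v} | u v. u \<in> V0 \<and> v \<in> V0 \<and> E0 u v} = {{0, 1}}"
    unfolding E0_def V0_def by auto
  then show "num_edges V0 E0 = 1" unfolding num_edges_def by simp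
  have ee: "{v \<in> V0. even (degree V0 E0 v)} = {}" using dg by auto
  show "num_even_deg V0 E0 = 0" unfolding num_even_deg_def ee by simp
  show "card V0 = 2" unfolding V0_def by simp
  have "{(\<Sum>v\<in>V0. f v) | f. is_STDF V0 E0 f} = {2}"
  proof
    show "{(\<Sum>v\<in>V0. f v) | f. is_STDF V0 E0 f} \<subseteq> {2}"
    proof
      fix s assume "s \<in> {(\<Sum>v\<in>V0. f v) | f. is_STDF V0 E0 f}"
      then obtain f where f: "is_STDF V0 E0 f" and s: "s = (\<Sum>v\<in>V0. f v)" by auto
      have "0 \<in> V0" "(1::nat) \<in> V0" unfolding V0_def by auto
      then have "f 1 \<ge> 1" "f 0 \<ge> 1" "f 0 \<le> 1" "f 1 \<le> 1"
        using f nb unfolding is_STDF_def by (auto split: if_splits)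
      then show "s \<in> {2}" using s unfolding V0_def by simp
    qed
    have "is_STDF V0 E0 (\<lambda>_. 1)" unfolding is_STDF_def using nb by simp
    then show "{2} \<subseteq> {(\<Sum>v\<in>V0. f v) | f. is_STDF V0 E0 f}" unfolding V0_def by force
  qed
  then show "gamma_st V0 E0 = 2" unfolding gamma_st_def by simp
qed

theorem theorem3p2:
  fixes V :: "'a set" and E :: "'a \<Rightarrow> 'a \<Rightarrow> bool"
  assumes "simple_graph V E" and "V \<noteq> {}" and "no_isolated V E"
  shows
   "(let n = real (card V); m = real (num_edges V E); ne = real (num_even_deg V E);
         fd = real (min_degree V E div 2); cD = real ((max_degree V E + 1) div 2);
         d = real (min_degree V E); D = real (max_degree V E)
     in real_of_int (gamma_st V E) \<ge> ((fd - cD + 2) * n) / (fd + cD)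
      \<and> real_of_int (gamma_st V E) \<ge> ((5 - 3*D - 2*cD) * n + 2*ne + 8*m) / (3*D + 2*cD - 1)
      \<and> real_of_int (gamma_st V E) \<ge> ((5 + 3*d - 2*cD) * n + 2*ne - 4*m) / (3*d + 2*cD - 1))
   \<and>
   (\<exists>(V1::nat set) E1. simple_graph V1 E1 \<and> V1 \<noteq> {} \<and> no_isolated V1 E1 \<and>
      real_of_int (gamma_st V1 E1) =
        ((real (min_degree V1 E1 div 2) - real ((max_degree V1 E1 + 1) div 2) + 2) * real (card V1))
        / (real (min_degree V1 E1 div 2) + real ((max_degree V1 E1 + 1) div 2)))
   \<and>
   (\<exists>(V2::nat set) E2. simple_graph V2 E2 \<and> V2 \<noteq> {} \<and> no_isolated V2 E2 \<and>
      real_of_int (gamma_st V2 E2) =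
        ((5 - 3 * real (max_degree V2 E2) - 2 * real ((max_degree V2 E2 + 1) div 2)) * real (card V2)
          + 2 * real (num_even_deg V2 E2) + 8 * real (num_edges V2 E2))
        / (3 * real (max_degree V2 E2) + 2 * real ((max_degree V2 E2 + 1) div 2) - 1))
   \<and>
   (\<exists>(V3::nat set) E3. simple_graph V3 E3 \<and> V3 \<noteq> {} \<and> no_isolated V3 E3 \<and>
      real_of_int (gamma_st V3 E3) =
        ((5 + 3 * real (min_degree V3 E3) - 2 * real ((max_degree V3 E3 + 1) div 2)) * real (card V3)
          + 2 * real (num_even_deg V3 E3) - 4 * real (num_edges V3 E3))
        / (3 * real (min_degree V3 E3) + 2 * real ((max_degree V3 E3 + 1) div 2) - 1))"
  proof -
  obtain f where f: "is_STDF V E f" and gf: "gamma_st V E = (\<Sum>v\<in>V. f v)"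
    using gamma_attained[OF assms(1,3)] by blast
  note mb = main_bound[OF assms f, unfolded gf[symmetric]]
  have ex: "\<exists>(V1::nat set) E1. simple_graph V1 E1 \<and> V1 \<noteq> {} \<and> no_isolated V1 E1 \<and> P V1 E1"
    if "P V0 E0" for P using K2_facts that by blast
  show ?thesis
    unfolding Let_def
    apply (intro conjI)
    using mb apply (simp_all only:)
    apply (rule ex, simp add: K2_facts)+
    done
qed

end
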